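(* Let $i \geq 1$ be an integer and for $k \in \{1, 2, \dots, 3^i\}$ let $P^k_{C_i} = \left(\frac{k-1}{3^i}, \frac{k}{3^i}\right)$. If $m, n, s \in \{1, \dots, 3^i\}$ satisfy $s = \frac{1}{2}(m+n)$, then $P^s_{C_i} \subset M_{P^m_{C_i} \cup P^n_{C_i}}$.
   Context: For a set $A \subset \mathbb{R}$, the midpoint set of $A$ is $M_A := \left\{\frac{x+y}{2} : x, y \in A,\ x \neq y\right\}$. *)

theory Defs
  imports Complex_Main
begin

definition midpoint_set :: "real set \<Rightarrow> real set" where
  "midpoint_set A = {(x + y) / 2 | x y. x \<in> A \<and> y \<in> A \<and> x \<noteq> y}"

definition P_C :: "nat \<Rightarrow> nat \<Rightarrow> real set" where
  "P_C i k = {(real k - 1) / 3 ^ i <..< real k / 3 ^ i}"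

end

theory Submission
  imports Defs
begin

theorem lemma2p4:
  fixes i m n s :: nat
  assumes "i \<ge> 1"
    and "m \<in> {1..3 ^ i}" and "n \<in> {1..3 ^ i}" and "s \<in> {1..3 ^ i}"
    and "real s = (real m + real n) / 2"
  shows "P_C i s \<subseteq> midpoint_set (P_C i m \<union> P_C i n)"
proof
  fix z assume z: "z \<in> P_C i s"
  define h :: real where "h = 1 / 3 ^ i"
  have hp: "h > 0" by (simp add: h_def)
  have zs: "(real s - 1) * h < z" "z < real s * h"
    using z by (auto simp: P_C_def h_def)
  have PC: "P_C i k = {(real k - 1) * h <..< real k * h}" for k
    by (simp add: P_C_def h_def)
  show "z \<in> midpoint_set (P_C i m \<union> P_C i n)"
  proof (cases "m = n")
    case True
    hence sm: "s = m" using assms(5) by simp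
    define e where "e = min (z - (real s - 1) * h) (real s * h - z) / 2"
    have e: "e > 0" "e < z - (real s - 1) * h" "e < real s * h - z"
      using zs by (auto simp: e_def)
    have "z - e \<in> P_C i m" "z + e \<in> P_C i m"
      using e zs sm by (auto simp: PC)
    moreover have "z = ((z - e) + (z + e)) / 2" by simp
    moreover have "z - e \<noteq> z + e" using e by simp
    ultimately show ?thesis unfolding midpoint_set_def by blast
  next
    case False
    define x where "x = z + (real m - real s) * h"
    define y where "y = z + (real n - real s) * h"
    have "x \<in> P_C i m" unfolding PC x_def using zs by (auto simp: algebra_simps)
    moreover have "y \<in> P_C i n" unfolding PC y_def using zs by (auto simp: algebra_simps)
    moreover have "z = (x + y) / 2" unfolding x_def y_def using assms(5)
      by (simp add: algebra_simps)
    moreover have "x \<noteq> y" unfolding x_def y_def using False hp by simp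
    ultimately show ?thesis unfolding midpoint_set_def by blast
  qed
qed

end
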